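(* Let $\rho$ be a density matrix on $\mathbb{C}^d$ and $H$ a Hermitian operator on $\mathbb{C}^d$, and suppose $F_Q>0$. Then for every integer $n\ge 1$, $$\mathcal{E}_n^{(\mathsf{Kry})}\coloneqq\frac{\left|B_n^{(\mathsf{Kry})}-F_Q\right|}{F_Q}\le 4\left[\frac{\sqrt{\kappa(\rho)}-1}{\sqrt{\kappa(\rho)}+1}\right]^{2n},$$ where $\kappa(\rho)=p_{\max}/p_{\min}$ if $\rho$ is full rank and $\kappa(\rho)=2p_{\max}/p_{\min}$ otherwise, with $p_{\max}$ and $p_{\min}$ the largest and smallest nonzero eigenvalues of $\rho$. In particular, $\mathcal{E}_n^{(\mathsf{Kry})}$ decreases exponentially to zero as $n$ increases.
   Context: Write $\rho=\sum_k p_k|k\rangle\langle k|$ (spectral decomposition, orthonormal eigenbasis $\{|k\rangle\}$). The quantum Fisher information (QFI) of $\rho$ with respect to $H$ is $F_Q=2\sum_{k,l:\,p_k+p_l>0}\frac{(p_k-p_l)^2}{p_k+p_l}|\langle k|H|l\rangle|^2$. Let $\mathcal{X}$ be the real vector space of Hermitian operators $X$ with $\langle k|X|l\rangle=0$ whenever $p_k=p_l=0$, equipped with the inner product $\langle X,Y\rangle_\rho=\mathrm{tr}[\rho(XY+YX)/2]$ and norm $\|X\|_\rho=\sqrt{\langle X,X\rangle_\rho}$. Let $\mathcal{R}_\rho(X)=\frac12(\rho X+X\rho)$. The symmetric logarithmic derivative (SLD) $L$ is the unique $L\in\mathcal{X}$ with $\mathcal{R}_\rho(L)=i[\rho,H]$;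 one has $F_Q=\|L\|_\rho^2$. The Krylov subspace of order $n$ is $\mathcal{K}_n=\mathrm{span}\{i[\rho,H],\mathcal{R}_\rho(i[\rho,H]),\dots,\mathcal{R}_\rho^{n-1}(i[\rho,H])\}\subseteq\mathcal{X}$ (real span). Let $L_n\in\mathcal{K}_n$ be the element of $\mathcal{K}_n$ closest to $L$ in the norm $\|\cdot\|_\rho$ (i.e., the $\langle\cdot,\cdot\rangle_\rho$-orthogonal projection of $L$ onto $\mathcal{K}_n$). The $n$-th Krylov bound is $B_n^{(\mathsf{Kry})}=\|L_n\|_\rho^2$. *)

theory Defs
  imports "HOL-Analysis.Analysis"
begin

text \<open>Operators on C^d are represented as matrices complex^'n^'n, with d = CARD('n).\<close>

definition cadj :: "complex^'n^'n \<Rightarrow> complex^'n^'n" where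
  "cadj A = (\<chi> i j. cnj (A $ j $ i))"

definition hermitian_mat :: "complex^'n^'n \<Rightarrow> bool" where
  "hermitian_mat A \<longleftrightarrow> cadj A = A"

definition unitary_mat :: "complex^'n^'n \<Rightarrow> bool" where
  "unitary_mat U \<longleftrightarrow> cadj U ** U = mat 1 \<and> U ** cadj U = mat 1"

definition density_mat :: "complex^'n^'n \<Rightarrow> bool" where
  "density_mat \<rho> \<longleftrightarrow> hermitian_mat \<rho>
     \<and> (\<forall>v::complex^'n. let q = (\<Sum>i\<in>UNIV. cnj (v $ i) * (\<rho> *v v) $ i) in Im q = 0 \<and> Re q \<ge> 0)
     \<and> trace \<rho> = 1"

definition rdiag :: "('n \<Rightarrow> real) \<Rightarrow> complex^'n^'n" where
  "rdiag p = (\<chi> i j. if i = j then complex_of_real (p i) else 0)"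

text \<open>Spectral decomposition rho = sum_k p_k |k><k|, with |k> the k-th column of the unitary U.\<close>
definition spectral_decomp :: "complex^'n^'n \<Rightarrow> complex^'n^'n \<Rightarrow> ('n \<Rightarrow> real) \<Rightarrow> bool" where
  "spectral_decomp \<rho> U p \<longleftrightarrow> unitary_mat U \<and> \<rho> = U ** rdiag p ** cadj U"

text \<open>Matrix elements <k|X|l> in the eigenbasis given by U.\<close>
definition melem :: "complex^'n^'n \<Rightarrow> complex^'n^'n \<Rightarrow> 'n \<Rightarrow> 'n \<Rightarrow> complex" where
  "melem U X k l = (cadj U ** X ** U) $ k $ l"

definition QFI :: "complex^'n^'n \<Rightarrow> ('n \<Rightarrow> real) \<Rightarrow> complex^'n^'n \<Rightarrow> real" where
  "QFI U p H = 2 * (\<Sum>k\<in>UNIV. \<Sum>l\<in>UNIV.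
      if p k + p l > 0 then (p k - p l)^2 / (p k + p l) * (cmod (melem U H k l))^2 else 0)"

definition Xspace :: "complex^'n^'n \<Rightarrow> ('n \<Rightarrow> real) \<Rightarrow> (complex^'n^'n) set" where
  "Xspace U p = {X. hermitian_mat X \<and> (\<forall>k l. p k = 0 \<and> p l = 0 \<longrightarrow> melem U X k l = 0)}"

definition rho_inner :: "complex^'n^'n \<Rightarrow> complex^'n^'n \<Rightarrow> complex^'n^'n \<Rightarrow> real" where
  "rho_inner \<rho> X Y = Re (trace (\<rho> ** (X ** Y + Y ** X)) / 2)"

definition rho_norm :: "complex^'n^'n \<Rightarrow> complex^'n^'n \<Rightarrow> real" where
  "rho_norm \<rho> X = sqrt (rho_inner \<rho> X X)"

definition Rop :: "complex^'n^'n \<Rightarrow> complex^'n^'n \<Rightarrow> complex^'n^'n" where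
  "Rop \<rho> X = (1/2::real) *\<^sub>R (\<rho> ** X + X ** \<rho>)"

definition icomm :: "complex^'n^'n \<Rightarrow> complex^'n^'n \<Rightarrow> complex^'n^'n" where
  "icomm \<rho> H = (\<chi> i j. \<i> * (\<rho> ** H - H ** \<rho>) $ i $ j)"

definition SLD :: "complex^'n^'n \<Rightarrow> complex^'n^'n \<Rightarrow> ('n \<Rightarrow> real) \<Rightarrow> complex^'n^'n \<Rightarrow> complex^'n^'n" where
  "SLD \<rho> U p H = (THE L. L \<in> Xspace U p \<and> Rop \<rho> L = icomm \<rho> H)"

text \<open>Krylov subspace of order n (real span; span is the real-vector-space span).\<close>
definition krylov :: "complex^'n^'n \<Rightarrow> complex^'n^'n \<Rightarrow> nat \<Rightarrow> (complex^'n^'n) set" where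
  "krylov \<rho> H n = span ((\<lambda>j. (Rop \<rho> ^^ j) (icomm \<rho> H)) ` {..<n})"

definition krylov_proj :: "complex^'n^'n \<Rightarrow> complex^'n^'n \<Rightarrow> ('n \<Rightarrow> real) \<Rightarrow> complex^'n^'n \<Rightarrow> nat \<Rightarrow> complex^'n^'n" where
  "krylov_proj \<rho> U p H n = (THE Y. Y \<in> krylov \<rho> H n \<and>
      (\<forall>Z\<in>krylov \<rho> H n. rho_inner \<rho> (SLD \<rho> U p H - Y) Z = 0))"

definition krylov_bound :: "complex^'n^'n \<Rightarrow> complex^'n^'n \<Rightarrow> ('n \<Rightarrow> real) \<Rightarrow> complex^'n^'n \<Rightarrow> nat \<Rightarrow> real" where
  "krylov_bound \<rho> U p H n = (rho_norm \<rho> (krylov_proj \<rho> U p H n))^2"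

definition kappa :: "('n::finite \<Rightarrow> real) \<Rightarrow> real" where
  "kappa p = (let pmax = Max {p k | k. p k \<noteq> 0}; pmin = Min {p k | k. p k \<noteq> 0}
              in if (\<forall>k. p k \<noteq> 0) then pmax / pmin else 2 * pmax / pmin)"

end

theory Submission
  imports Defs "HOL-Computational_Algebra.Polynomial"
begin


fun cheb :: "nat \<Rightarrow> real poly" where
  "cheb 0 = 1" | "cheb (Suc 0) = [:0,1:]" | "cheb (Suc (Suc n)) = [:0,2:] * cheb (Suc n) - cheb n"

lemma cheb_degree: "degree (cheb n) \<le> n"
proof (induction n rule: cheb.induct)
  case (3 n)
  have "degree ([:0,2:] * cheb (Suc n)) \<le> Suc (Suc n)"
    using degree_mult_le[of "[:0,2:]" "cheb (Suc n)"] 3 by simp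
  then show ?case using 3 degree_diff_le by (metis cheb.simps(3) le_Suc_eq)
qed auto

lemma cheb_cos: "poly (cheb n) (cos t) = cos (real n * t)"
proof (induction n rule: cheb.induct)
  case (3 n)
  have "cos (real (Suc (Suc n)) * t) = 2 * cos t * cos (real (Suc n) * t) - cos (real n * t)"
  proof -
    have a: "real (Suc (Suc n)) * t = real (Suc n) * t + t" by (simp add: algebra_simps)
    have b: "real n * t = real (Suc n) * t - t" by (simp add: algebra_simps)
    show ?thesis unfolding a b cos_add cos_diff by simp
  qed
  then show ?case using 3 by simp
qed auto

lemma cheb_hyp: assumes "z \<noteq> 0"
  shows "poly (cheb n) ((z + inverse z)/2) = (z^n + inverse z ^ n)/2"
proof (induction n rule: cheb.induct)
  case (3 n)
  have "z ^ Suc (Suc n) + inverse z ^ Suc (Suc n) =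
        (z + inverse z) * (z ^ Suc n + inverse z ^ Suc n) - (z^n + inverse z ^ n)"
    using assms by (simp add: field_simps power_Suc)
  have "poly (cheb (Suc (Suc n))) ((z + inverse z)/2) =
     (z + inverse z) * poly (cheb (Suc n)) ((z + inverse z)/2) - poly (cheb n) ((z + inverse z)/2)"
    by simp
  also have "\<dots> = (z + inverse z) * ((z ^ Suc n + inverse z ^ Suc n)/2) - (z^n + inverse z ^ n)/2"
    by (simp only: 3)
  also have "\<dots> = (z ^ Suc (Suc n) + inverse z ^ Suc (Suc n))/2"
    using assms \<open>z ^ Suc (Suc n) + inverse z ^ Suc (Suc n) = _\<close> by (simp add: field_simps)
  finally show ?case .
qed auto

lemma cheb_exists:
  fixes a b :: real and n :: nat
  assumes "0 < a" "a \<le> b" "n \<ge> 1"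
  shows "\<exists>c::nat\<Rightarrow>real. \<forall>x\<in>{a..b}.
     \<bar>1 - x * (\<Sum>j<n. c j * x^j)\<bar> \<le> 2 * ((sqrt (b/a) - 1) / (sqrt (b/a) + 1)) ^ n"
proof (cases "a = b")
  case True
  let ?c = "\<lambda>j::nat. if j = 0 then 1/a else 0"
  have s: "(\<Sum>j<n. ?c j * x^j) = 1/a" for x
  proof -
    have "(\<Sum>j<n. ?c j * x^j) = (\<Sum>j\<in>{..<n}. if j = 0 then 1/a else 0)"
      by (rule sum.cong) auto
    also have "\<dots> = 1/a" using assms by (simp add: sum.delta)
    finally show ?thesis .
  qed
  show ?thesis
    by (rule exI[of _ ?c]) (use True assms in \<open>auto simp: s\<close>)
next
  case False
  then have ab: "a < b" using assms by simp
  define s where "s = sqrt (b/a)"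
  have s1: "s > 1" unfolding s_def using ab assms by simp
  have s2: "s^2 = b/a" unfolding s_def using ab assms by simp
  define z where "z = (s+1)/(s-1)"
  have z1: "z > 1" unfolding z_def using s1 by (simp add: field_simps)
  define \<sigma> where "\<sigma> = (b+a)/(b-a)"
  have zs: "(z + inverse z)/2 = \<sigma>"
  proof -
    have ss: "s * s - 1 > 0" using s1 by (simp add: less_1_mult)
    have "(z + inverse z)/2 = ((s+1)*(s+1) + (s-1)*(s-1)) / (2*((s+1)*(s-1)))" unfolding z_def using s1
      by (simp add: field_simps)
    also have "\<dots> = (s^2+1)/(s^2-1)" using ss
      by (simp add: field_simps power2_eq_square)
    also have "\<dots> = \<sigma>" unfolding s2 \<sigma>_def using assms ab by (simp add: field_simps)
    finally show ?thesis .
  qed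
  define T where "T = poly (cheb n) \<sigma>"
  have T: "T = (z^n + inverse z ^ n)/2" unfolding T_def zs[symmetric]
    using z1 by (intro cheb_hyp) auto
  have Tpos: "T > 0" unfolding T using z1 by (simp add: add_pos_pos)
  have Tge: "1/T \<le> 2 * (inverse z)^n"
  proof -
    have "z^n / 2 \<le> T" unfolding T using z1 by simp
    moreover have "z^n > 0" using z1 by simp
    ultimately have "1/T \<le> 1/(z^n/2)" using Tpos by (intro divide_left_mono) auto
    also have "\<dots> = 2 * (inverse z)^n" by (simp add: power_inverse field_simps)
    finally show ?thesis .
  qed
  have iz: "inverse z = (s - 1)/(s + 1)" unfolding z_def by simp
  define P where "P = pcompose (cheb n) [: \<sigma>, -2/(b-a) :]"
  define S where "S = smult (1/T) P"
  have S0: "poly S 0 = 1" unfolding S_def P_def using Tpos by (simp add: poly_pcompose T_def)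
  define Q0 where "Q0 = 1 - S"
  have "poly Q0 0 = 0" unfolding Q0_def using S0 by simp
  then have "[:-0,1:] dvd Q0" using poly_eq_0_iff_dvd by blast
  then obtain q where q: "Q0 = [:0,1:] * q" by auto
  have dP: "degree P \<le> n" unfolding P_def degree_pcompose
    using cheb_degree[of n] by (simp add: mult_le_one)
  have dQ0: "degree Q0 \<le> n" unfolding Q0_def S_def
    using degree_diff_le[of 1 n "smult (1/T) P"] dP degree_smult_le[of "1/T" P] by simp
  have dq: "degree q < n"
  proof (cases "q = 0")
    case True then show ?thesis using assms by simp
  next
    case False
    then have "degree Q0 = 1 + degree q" unfolding q by (subst degree_mult_eq) auto
    then show ?thesis using dQ0 by simp
  qed
  have pq: "poly q x = (\<Sum>j<n. coeff q j * x^j)" for x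
  proof -
    have "poly q x = (\<Sum>j\<le>degree q. coeff q j * x^j)" by (simp add: poly_altdef)
    also have "\<dots> = (\<Sum>j<n. coeff q j * x^j)"
      by (rule sum.mono_neutral_left) (use dq in \<open>auto simp: coeff_eq_0\<close>)
    finally show ?thesis .
  qed
  show ?thesis
  proof (intro exI[of _ "coeff q"] ballI)
    fix x assume x: "x \<in> {a..b}"
    have "1 - x * (\<Sum>j<n. coeff q j * x^j) = poly S x"
      using arg_cong[OF q, of "\<lambda>p. poly p x"] unfolding Q0_def pq[symmetric] by simp
    also have "\<dots> = poly (cheb n) (\<sigma> - 2 * x/(b-a)) / T"
      unfolding S_def P_def by (simp add: poly_pcompose mult.commute)
    finally have e: "1 - x * (\<Sum>j<n. coeff q j * x^j) = poly (cheb n) (\<sigma> - 2 * x/(b-a)) / T" .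
    define y where "y = \<sigma> - 2 * x/(b-a)"
    have yy: "y = (b + a - 2*x)/(b-a)" unfolding y_def \<sigma>_def using ab by (simp add: diff_divide_distrib)
    have y: "-1 \<le> y \<and> y \<le> 1" unfolding yy using x ab
      by (auto simp: divide_le_eq le_divide_eq)
    have "poly (cheb n) y = cos (real n * arccos y)"
      using cheb_cos[of n "arccos y"] cos_arccos[of y] y by simp
    then have "\<bar>poly (cheb n) y\<bar> \<le> 1" by simp
    then have "\<bar>poly (cheb n) y / T\<bar> \<le> 1 / T" using Tpos by (simp add: divide_right_mono)
    also have "\<dots> \<le> 2 * (inverse z)^n" by (rule Tge)
    finally show "\<bar>1 - x * (\<Sum>j<n. coeff q j * x^j)\<bar> \<le> 2 * ((sqrt (b/a) - 1) / (sqrt (b/a) + 1)) ^ n"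
      using e unfolding y_def iz s_def by simp
  qed
qed



lemma cadj_mult: "cadj (A ** B) = cadj B ** cadj (A::complex^'n^'n)"
  unfolding vec_eq_iff cadj_def matrix_matrix_mult_def by (simp add: mult.commute)

lemma cadj_cadj[simp]: "cadj (cadj A) = A"
  by (simp add: cadj_def vec_eq_iff)

lemma mmult3: "((A::complex^'n^'n) ** B ** C) $ i $ j = (\<Sum>a\<in>UNIV. \<Sum>b\<in>UNIV. A$i$a * B$a$b * C$b$j)"
proof -
  have "((A::complex^'n^'n) ** B ** C) $ i $ j = (\<Sum>b\<in>UNIV. \<Sum>a\<in>UNIV. A$i$a * B$a$b * C$b$j)"
    by (simp add: matrix_matrix_mult_def sum_distrib_right)
  also have "\<dots> = (\<Sum>a\<in>UNIV. \<Sum>b\<in>UNIV. A$i$a * B$a$b * C$b$j)" by (rule sum.swap)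
  finally show ?thesis .
qed

lemma melem_add: "melem U (X + Y) k l = melem U X k l + melem U Y k l"
  by (simp add: melem_def mmult3 distrib_left distrib_right sum.distrib)

lemma melem_diff: "melem U (X - Y) k l = melem U X k l - melem U Y k l"
  by (simp add: melem_def mmult3 algebra_simps sum_subtractf)

lemma melem_scaleR: "melem U (c *\<^sub>R X) k l = c *\<^sub>R melem U X k l"
  by (simp add: melem_def matrix_scalar_ac scalar_matrix_assoc[symmetric])

lemma melem_sum: "melem U (sum f S) k l = (\<Sum>x\<in>S. melem U (f x) k l)"
proof (induction S rule: infinite_finite_induct)
  case (infinite S) then show ?case by (simp add: melem_def)
next
  case empty show ?case by (simp add: melem_def)
next
  case (insert x F) then show ?case by (simp add: melem_add)
qed

lemma melem_cscale: "melem U (\<chi> i j. c * A $ i $ j) k l = c * melem U A k l"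
  by (simp add: melem_def mmult3 sum_distrib_left algebra_simps)

lemma co_mult: assumes "unitary_mat U"
  shows "cadj U ** (A ** B) ** U = (cadj U ** A ** U) ** (cadj U ** B ** U)"
proof -
  have "(cadj U ** A ** U) ** (cadj U ** B ** U) = cadj U ** A ** (U ** cadj U) ** B ** U"
    by (simp add: matrix_mul_assoc)
  also have "\<dots> = cadj U ** (A ** B) ** U" using assms
    by (simp add: unitary_mat_def matrix_mul_assoc)
  finally show ?thesis by simp
qed

lemma co_inv: assumes "unitary_mat U"
  shows "U ** (cadj U ** X ** U) ** cadj U = X"
proof -
  have "U ** (cadj U ** X ** U) ** cadj U = (U ** cadj U) ** X ** (U ** cadj U)"
    by (simp add: matrix_mul_assoc)
  then show ?thesis using assms by (simp add: unitary_mat_def)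
qed

lemma co_inv2: assumes "unitary_mat U"
  shows "cadj U ** (U ** M ** cadj U) ** U = M"
proof -
  have "cadj U ** (U ** M ** cadj U) ** U = (cadj U ** U) ** M ** (cadj U ** U)"
    by (simp add: matrix_mul_assoc)
  then show ?thesis using assms by (simp add: unitary_mat_def)
qed

lemma melem_inj: assumes "unitary_mat U" "\<And>k l. melem U X k l = melem U Y k l"
  shows "X = Y"
proof -
  have e: "cadj U ** X ** U = cadj U ** Y ** U" using assms(2) unfolding melem_def vec_eq_iff by blast
  have "X = U ** (cadj U ** X ** U) ** cadj U" using co_inv[OF assms(1), of X] by simp
  also have "\<dots> = U ** (cadj U ** Y ** U) ** cadj U" unfolding e ..
  also have "\<dots> = Y" using co_inv[OF assms(1), of Y] .
  finally show ?thesis .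
qed

lemma melem_of: assumes "unitary_mat U"
  shows "melem U (U ** M ** cadj U) k l = M $ k $ l"
  unfolding melem_def co_inv2[OF assms] ..

lemma co_rho: assumes "spectral_decomp \<rho> U p"
  shows "cadj U ** \<rho> ** U = rdiag p"
proof -
  have u: "unitary_mat U" and r: "\<rho> = U ** rdiag p ** cadj U" using assms by (auto simp: spectral_decomp_def)
  show ?thesis unfolding r co_inv2[OF u] ..
qed

lemma rdiag_left: "(rdiag p ** M) $ k $ l = of_real (p k) * M $ k $ l"
  by (simp add: rdiag_def matrix_matrix_mult_def if_distrib if_distribR cong: if_cong)

lemma rdiag_right: "(M ** rdiag p) $ k $ l = M $ k $ l * of_real (p l)"
  by (simp add: rdiag_def matrix_matrix_mult_def if_distrib if_distribR cong: if_cong)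

lemma melem_mult: assumes "unitary_mat U"
  shows "melem U (A ** B) k l = ((cadj U ** A ** U) ** (cadj U ** B ** U)) $ k $ l"
  using co_mult[OF assms] by (simp add: melem_def)

lemma melem_rho_left: assumes "spectral_decomp \<rho> U p"
  shows "melem U (\<rho> ** X) k l = of_real (p k) * melem U X k l"
proof -
  have u: "unitary_mat U" using assms by (simp add: spectral_decomp_def)
  show ?thesis unfolding melem_mult[OF u] co_rho[OF assms] rdiag_left by (simp add: melem_def)
qed

lemma melem_rho_right: assumes "spectral_decomp \<rho> U p"
  shows "melem U (X ** \<rho>) k l = melem U X k l * of_real (p l)"
proof -
  have u: "unitary_mat U" using assms by (simp add: spectral_decomp_def)
  show ?thesis unfolding melem_mult[OF u] co_rho[OF assms] rdiag_right by (simp add: melem_def)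
qed

lemma melem_Rop: assumes "spectral_decomp \<rho> U p"
  shows "melem U (Rop \<rho> X) k l = of_real ((p k + p l)/2) * melem U X k l"
proof -
  have u: "unitary_mat U" using assms by (simp add: spectral_decomp_def)
  have "melem U (Rop \<rho> X) k l = (1/2::real) *\<^sub>R (melem U (\<rho> ** X) k l + melem U (X ** \<rho>) k l)"
    by (simp add: Rop_def melem_scaleR melem_add)
  also have "\<dots> = (1/2::real) *\<^sub>R (of_real (p k) * melem U X k l + melem U X k l * of_real (p l))"
    using assms by (simp add: melem_rho_left melem_rho_right)
  finally show ?thesis by (simp add: scaleR_conv_of_real algebra_simps)
qed

lemma melem_icomm: assumes "spectral_decomp \<rho> U p"
  shows "melem U (icomm \<rho> H) k l = \<i> * of_real (p k - p l) * melem U H k l"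
proof -
  have u: "unitary_mat U" using assms by (simp add: spectral_decomp_def)
  have "melem U (icomm \<rho> H) k l = \<i> * (melem U (\<rho> ** H) k l - melem U (H ** \<rho>) k l)"
  proof -
    have "icomm \<rho> H = (\<chi> i j. \<i> * (\<rho> ** H - H ** \<rho>) $ i $ j)" by (simp add: icomm_def)
    then show ?thesis by (simp only: melem_cscale melem_diff)
  qed
  also have "\<dots> = \<i> * (of_real (p k) * melem U H k l - melem U H k l * of_real (p l))"
    using assms by (simp add: melem_rho_left melem_rho_right)
  finally show ?thesis by (simp add: algebra_simps)
qed

lemma cadj_conj: "cadj (U ** M ** cadj U) = U ** cadj M ** cadj (U::complex^'n^'n)"
  by (simp add: cadj_mult matrix_mul_assoc)

lemma herm_iff: assumes "unitary_mat U"
  shows "hermitian_mat X \<longleftrightarrow> (\<forall>k l. melem U X l k = cnj (melem U X k l))"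
proof
  assume h: "hermitian_mat X"
  have "cadj (cadj U ** X ** U) = cadj U ** X ** U"
    using h by (simp add: cadj_mult hermitian_mat_def matrix_mul_assoc)
  show "\<forall>k l. melem U X l k = cnj (melem U X k l)"
  proof (intro allI)
    fix k l
    have "cadj (cadj U ** X ** U) $ l $ k = (cadj U ** X ** U) $ l $ k" using \<open>cadj (cadj U ** X ** U) = _\<close> by simp
    then show "melem U X l k = cnj (melem U X k l)" by (simp add: cadj_def melem_def)
  qed
next
  assume r: "\<forall>k l. melem U X l k = cnj (melem U X k l)"
  have r2: "cnj ((cadj U ** X ** U) $ j $ i) = (cadj U ** X ** U) $ i $ j" for i j
    using r unfolding melem_def by (metis complex_cnj_cnj)
  have c: "cadj (cadj U ** X ** U) = cadj U ** X ** U"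
    unfolding vec_eq_iff cadj_def[of "cadj U ** X ** U"] by (simp only: vec_lambda_beta r2 simp_thms)
  have "cadj X = cadj (U ** (cadj U ** X ** U) ** cadj U)" using co_inv[OF assms] by simp
  also have "\<dots> = U ** cadj (cadj U ** X ** U) ** cadj U"
    by (simp only: cadj_conj)
  also have "\<dots> = U ** (cadj U ** X ** U) ** cadj U"
    by (simp only: c)
  also have "\<dots> = X" using co_inv[OF assms] by simp
  finally show "hermitian_mat X" by (simp add: hermitian_mat_def)
qed



lemma p_nonneg: assumes "density_mat \<rho>" "spectral_decomp \<rho> U p"
  shows "p k \<ge> 0"
proof -
  define v where "v = (\<chi> i. U $ i $ k)"
  have "melem U \<rho> k k = of_real (p k)"
    unfolding melem_def co_rho[OF assms(2)] by (simp add: rdiag_def)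
  moreover have "melem U \<rho> k k = (\<Sum>i\<in>UNIV. cnj (v $ i) * (\<rho> *v v) $ i)"
    unfolding melem_def mmult3 v_def
    by (simp add: matrix_vector_mult_def cadj_def sum_distrib_left mult.assoc)
  moreover have "Re (\<Sum>i\<in>UNIV. cnj (v $ i) * (\<rho> *v v) $ i) \<ge> 0"
    using assms(1) unfolding density_mat_def Let_def by blast
  ultimately show ?thesis by simp
qed

definition phi :: "complex^'n^'n \<Rightarrow> ('n \<Rightarrow> real) \<Rightarrow> complex^'n^'n \<Rightarrow> complex^('n \<times> 'n)" where
  "phi U p X = (\<chi> kl. sqrt (p (fst kl)) *\<^sub>R melem U X (fst kl) (snd kl))"

lemma phi_linear: "linear (phi U p)"
  by (rule linearI) (simp_all add: phi_def vec_eq_iff melem_add melem_scaleR algebra_simps)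

lemma phi_inner: fixes p :: "'n::finite \<Rightarrow> real" assumes "\<And>k. p k \<ge> 0"
  shows "phi U p X \<bullet> phi U p Y = (\<Sum>k\<in>UNIV. \<Sum>l\<in>UNIV. p k * Re (melem U X k l * cnj (melem U Y k l)))"
proof -
  have "phi U p X \<bullet> phi U p Y = (\<Sum>kl\<in>UNIV. p (fst kl) * Re (melem U X (fst kl) (snd kl) * cnj (melem U Y (fst kl) (snd kl))))"
    unfolding inner_vec_def phi_def
  proof (rule sum.cong)
    fix kl :: "'n \<times> 'n"
    have sq: "sqrt (p (fst kl)) * sqrt (p (fst kl)) = p (fst kl)" using assms by simp
    have gen: "(c *\<^sub>R x) \<bullet> (c *\<^sub>R y) = (c * c) * Re (x * cnj y)" for c and x y :: complex
      by (simp add: inner_complex_def algebra_simps)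
    show "(\<chi> kl. sqrt (p (fst kl)) *\<^sub>R melem U X (fst kl) (snd kl)) $ kl \<bullet>
          (\<chi> kl. sqrt (p (fst kl)) *\<^sub>R melem U Y (fst kl) (snd kl)) $ kl =
          p (fst kl) * Re (melem U X (fst kl) (snd kl) * cnj (melem U Y (fst kl) (snd kl)))"
      by (simp only: vec_lambda_beta gen sq)
  qed simp
  also have "\<dots> = (\<Sum>kl\<in>UNIV \<times> UNIV. p (fst kl) * Re (melem U X (fst kl) (snd kl) * cnj (melem U Y (fst kl) (snd kl))))"
    by (simp add: UNIV_Times_UNIV)
  also have "\<dots> = (\<Sum>k\<in>UNIV. \<Sum>l\<in>UNIV. p k * Re (melem U X k l * cnj (melem U Y k l)))"
    by (simp add: sum.cartesian_product split_def)
  finally show ?thesis .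
qed

lemma trace_co: assumes "unitary_mat U" shows "trace (cadj U ** M ** U) = trace M"
proof -
  have "trace ((cadj U ** M) ** U) = trace (U ** (cadj U ** M))" by (rule trace_mul_sym)
  also have "\<dots> = trace ((U ** cadj U) ** M)" by (simp add: matrix_mul_assoc)
  finally show ?thesis using assms by (simp add: unitary_mat_def)
qed

lemma rho_inner_herm: assumes "density_mat \<rho>" "spectral_decomp \<rho> U p"
  "hermitian_mat X" "hermitian_mat Y"
  shows "rho_inner \<rho> X Y = phi U p X \<bullet> phi U p Y"
proof -
  have u: "unitary_mat U" using assms by (simp add: spectral_decomp_def)
  have hx: "melem U X l k = cnj (melem U X k l)" for k l using assms(3) herm_iff[OF u] by blast
  have hy: "melem U Y l k = cnj (melem U Y k l)" for k l using assms(4) herm_iff[OF u] by blast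
  have "trace (\<rho> ** (X ** Y + Y ** X)) = trace (cadj U ** (\<rho> ** (X ** Y + Y ** X)) ** U)"
    using trace_co[OF u] by simp
  also have "\<dots> = (\<Sum>k\<in>UNIV. melem U (\<rho> ** (X ** Y + Y ** X)) k k)"
    by (simp add: trace_def melem_def)
  also have "\<dots> = (\<Sum>k\<in>UNIV. of_real (p k) * (\<Sum>l\<in>UNIV.
        melem U X k l * melem U Y l k + melem U Y k l * melem U X l k))"
    unfolding melem_rho_left[OF assms(2)] unfolding melem_add unfolding melem_mult[OF u]
    by (simp add: matrix_matrix_mult_def melem_def sum.distrib)
  also have "\<dots> = (\<Sum>k\<in>UNIV. of_real (p k) * (\<Sum>l\<in>UNIV.
        melem U X k l * cnj (melem U Y k l) + cnj (melem U X k l * cnj (melem U Y k l))))"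
    apply (intro sum.cong refl arg_cong2[where f="(*)"])
    subgoal for k l by (simp only: hx[of k l] hy[of k l] complex_cnj_mult complex_cnj_cnj mult.commute)
    done
  finally have t: "trace (\<rho> ** (X ** Y + Y ** X)) = \<dots>" .
  have "rho_inner \<rho> X Y = (\<Sum>k\<in>UNIV. p k * (\<Sum>l\<in>UNIV. Re (melem U X k l * cnj (melem U Y k l))))"
    unfolding rho_inner_def t by (simp add: Re_sum sum_divide_distrib sum_distrib_left, intro sum.cong refl, simp add: field_simps)
  also have "\<dots> = phi U p X \<bullet> phi U p Y"
    using phi_inner[of p U X Y] p_nonneg[OF assms(1,2)] by (simp add: sum_distrib_left)
  finally show ?thesis .
qed



lemma melem_zero[simp]: "melem U 0 k l = 0"
  by (simp add: melem_def)

lemma xspace_iff: assumes "unitary_mat U"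
  shows "X \<in> Xspace U p \<longleftrightarrow> (\<forall>k l. melem U X l k = cnj (melem U X k l))
     \<and> (\<forall>k l. p k = 0 \<and> p l = 0 \<longrightarrow> melem U X k l = 0)"
  unfolding Xspace_def using herm_iff[OF assms] by blast

lemma subspace_Xspace: assumes "unitary_mat U" shows "subspace (Xspace U p)"
  unfolding subspace_def
proof (intro conjI ballI allI)
  show "0 \<in> Xspace U p" unfolding xspace_iff[OF assms] by simp
next
  fix x y assume x: "x \<in> Xspace U p" and y: "y \<in> Xspace U p"
  have x1: "melem U x l k = cnj (melem U x k l)" and x2: "p k = 0 \<and> p l = 0 \<longrightarrow> melem U x k l = 0"
    and y1: "melem U y l k = cnj (melem U y k l)" and y2: "p k = 0 \<and> p l = 0 \<longrightarrow> melem U y k l = 0" for k l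
    using x y xspace_iff[OF assms] by blast+
  show "x + y \<in> Xspace U p" unfolding xspace_iff[OF assms] melem_add
  proof (intro conjI allI impI)
    fix k l
    show "melem U x l k + melem U y l k = cnj (melem U x k l + melem U y k l)"
      by (simp only: x1[of l k] y1[of l k] complex_cnj_add)
  qed (use x2 y2 in simp)
next
  fix c :: real and x assume x: "x \<in> Xspace U p"
  have x1: "melem U x l k = cnj (melem U x k l)" and x2: "p k = 0 \<and> p l = 0 \<longrightarrow> melem U x k l = 0" for k l
    using x xspace_iff[OF assms] by blast+
  show "c *\<^sub>R x \<in> Xspace U p" unfolding xspace_iff[OF assms] melem_scaleR
  proof (intro conjI allI impI)
    fix k l
    show "c *\<^sub>R melem U x l k = cnj (c *\<^sub>R melem U x k l)"
      by (simp only: x1[of l k] complex_cnj_scaleR)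
  qed (use x2 in simp)
qed

lemma Rop_Xspace: assumes "spectral_decomp \<rho> U p" "X \<in> Xspace U p"
  shows "Rop \<rho> X \<in> Xspace U p"
proof -
  have u: "unitary_mat U" using assms by (simp add: spectral_decomp_def)
  have x: "melem U X l k = cnj (melem U X k l)" "p k = 0 \<and> p l = 0 \<longrightarrow> melem U X k l = 0" for k l
    using assms(2) xspace_iff[OF u] by blast+
  show ?thesis unfolding xspace_iff[OF u] melem_Rop[OF assms(1)]
  proof (intro conjI allI impI)
    fix k l
    show "complex_of_real ((p l + p k) / 2) * melem U X l k = cnj (complex_of_real ((p k + p l) / 2) * melem U X k l)"
      by (simp only: x(1)[of k l] complex_cnj_cnj complex_cnj_mult complex_cnj_complex_of_real add.commute)
    assume "p k = 0 \<and> p l = 0"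
    then show "complex_of_real ((p k + p l) / 2) * melem U X k l = 0" using x(2) by simp
  qed
qed

lemma icomm_Xspace: assumes "spectral_decomp \<rho> U p" "hermitian_mat H"
  shows "icomm \<rho> H \<in> Xspace U p"
proof -
  have u: "unitary_mat U" using assms by (simp add: spectral_decomp_def)
  have h: "melem U H l k = cnj (melem U H k l)" for k l using assms(2) herm_iff[OF u] by blast
  show ?thesis unfolding xspace_iff[OF u] melem_icomm[OF assms(1)]
  proof (intro conjI allI impI)
    fix k l
    show "\<i> * complex_of_real (p l - p k) * melem U H l k = cnj (\<i> * complex_of_real (p k - p l) * melem U H k l)"
      unfolding h[of k l] by (simp add: algebra_simps)
  qed simp
qed

lemma gen_Xspace: assumes "spectral_decomp \<rho> U p" "hermitian_mat H"
  shows "(Rop \<rho> ^^ j) (icomm \<rho> H) \<in> Xspace U p"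
  by (induction j) (simp_all add: icomm_Xspace[OF assms] Rop_Xspace[OF assms(1)])

lemma krylov_Xspace: assumes "spectral_decomp \<rho> U p" "hermitian_mat H"
  shows "krylov \<rho> H n \<subseteq> Xspace U p"
proof -
  have u: "unitary_mat U" using assms by (simp add: spectral_decomp_def)
  show ?thesis unfolding krylov_def
    by (rule span_minimal) (use gen_Xspace[OF assms] subspace_Xspace[OF u] in auto)
qed

lemma Xspace_herm: "X \<in> Xspace U p \<Longrightarrow> hermitian_mat X"
  by (simp add: Xspace_def)

lemma phi_zero: assumes "unitary_mat U" "\<And>k. p k \<ge> 0" "X \<in> Xspace U p" "phi U p X \<bullet> phi U p X = 0"
  shows "X = 0"
proof -
  have z: "phi U p X = 0" using assms(4) by simp
  have pz: "p k > 0 \<Longrightarrow> melem U X k l = 0" for k l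
  proof -
    assume "p k > 0"
    have "(phi U p X) $ (k,l) = 0" using z by simp
    then show ?thesis using \<open>p k > 0\<close> by (simp add: phi_def)
  qed
  have x: "\<forall>k l. melem U X l k = cnj (melem U X k l)" "\<forall>k l. p k = 0 \<and> p l = 0 \<longrightarrow> melem U X k l = 0"
    using assms(3) xspace_iff[OF assms(1)] by blast+
  have "melem U X k l = melem U 0 k l" for k l
  proof (cases "p k > 0")
    case True then show ?thesis using pz by simp
  next
    case False
    then have k0: "p k = 0" using assms(2)[of k] by simp
    show ?thesis
    proof (cases "p l > 0")
      case True
      then have "melem U X l k = 0" using pz by simp
      moreover have "melem U X k l = cnj (melem U X l k)" using x(1) by blast
      ultimately show ?thesis by simp
    next
      case False
      then have "p l = 0" using assms(2)[of l] by simp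
      then show ?thesis using x(2) k0 by simp
    qed
  qed
  then show ?thesis using melem_inj[OF assms(1)] by blast
qed



definition Lc :: "complex^'n^'n \<Rightarrow> ('n \<Rightarrow> real) \<Rightarrow> complex^'n^'n \<Rightarrow> complex^'n^'n" where
  "Lc U p H = (\<chi> k l. if p k + p l > 0 then \<i> * of_real (2 * (p k - p l) / (p k + p l)) * melem U H k l else 0)"

lemma SLD_eq: assumes "density_mat \<rho>" "spectral_decomp \<rho> U p" "hermitian_mat H"
  shows "SLD \<rho> U p H = U ** Lc U p H ** cadj U"
    and "melem U (SLD \<rho> U p H) k l = Lc U p H $ k $ l"
    and "SLD \<rho> U p H \<in> Xspace U p"
proof -
  have u: "unitary_mat U" using assms by (simp add: spectral_decomp_def)
  have pn: "\<And>k. p k \<ge> 0" using p_nonneg[OF assms(1,2)] by blast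
  have h: "melem U H l k = cnj (melem U H k l)" for k l using assms(3) herm_iff[OF u] by blast
  define L0 where "L0 = U ** Lc U p H ** cadj U"
  have mL: "melem U L0 k l = Lc U p H $ k $ l" for k l unfolding L0_def melem_of[OF u] ..
  have L0X: "L0 \<in> Xspace U p"
    unfolding xspace_iff[OF u] mL
  proof (intro conjI allI impI)
    fix k l
    show "Lc U p H $ l $ k = cnj (Lc U p H $ k $ l)"
      by (simp add: Lc_def h[of k l] add.commute algebra_simps divide_simps)
  qed (simp add: Lc_def)
  have wL: "of_real ((p k + p l)/2) * Lc U p H $ k $ l = \<i> * of_real (p k - p l) * melem U H k l" for k l
  proof (cases "p k + p l > 0")
    case True
    define r where "r = 2 * (p k - p l) / (p k + p l)"
    have wr: "(p k + p l)/2 * r = p k - p l" using True unfolding r_def by (simp add: field_simps)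
    have "Lc U p H $ k $ l = \<i> * of_real r * melem U H k l"
      unfolding Lc_def vec_lambda_beta if_P[OF True] r_def ..
    then have "of_real ((p k + p l)/2) * Lc U p H $ k $ l = \<i> * of_real ((p k + p l)/2 * r) * melem U H k l"
      by (simp add: algebra_simps)
    then show ?thesis unfolding wr .
  next
    case False then have "p k = 0" "p l = 0" using pn[of k] pn[of l] by auto
    then show ?thesis by (simp add: Lc_def)
  qed
  have RL0: "Rop \<rho> L0 = icomm \<rho> H"
    by (rule melem_inj[OF u]) (simp only: melem_Rop[OF assms(2)] melem_icomm[OF assms(2)] mL wL)
  have uniq: "X = L0" if "X \<in> Xspace U p \<and> Rop \<rho> X = icomm \<rho> H" for X
  proof (rule melem_inj[OF u])
    fix k l
    have x2: "p k = 0 \<and> p l = 0 \<longrightarrow> melem U X k l = 0" using that xspace_iff[OF u] by blast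
    have e: "of_real ((p k + p l)/2) * melem U X k l = of_real ((p k + p l)/2) * melem U L0 k l"
      using arg_cong[OF conjunct2[OF that], of "\<lambda>Z. melem U Z k l"] RL0
      by (simp only: melem_Rop[OF assms(2)] melem_icomm[OF assms(2)] mL wL)
    show "melem U X k l = melem U L0 k l"
    proof (cases "p k + p l > 0")
      case True
      have nz: "complex_of_real ((p k + p l)/2) \<noteq> 0" using True by (simp only: of_real_eq_0_iff) simp
      show ?thesis using e unfolding mult_left_cancel[OF nz] .
    next
      case False then have "p k = 0" "p l = 0" using pn[of k] pn[of l] by auto
      then show ?thesis using x2 by (simp add: mL Lc_def)
    qed
  qed
  have S: "SLD \<rho> U p H = L0" unfolding SLD_def
  proof (rule the_equality)
    show "L0 \<in> Xspace U p \<and> Rop \<rho> L0 = icomm \<rho> H" using L0X RL0 by blast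
  next
    fix X assume "X \<in> Xspace U p \<and> Rop \<rho> X = icomm \<rho> H"
    then show "X = L0" by (rule uniq)
  qed
  show "SLD \<rho> U p H = U ** Lc U p H ** cadj U" using S L0_def by simp
  show "melem U (SLD \<rho> U p H) k l = Lc U p H $ k $ l" using S mL by simp
  show "SLD \<rho> U p H \<in> Xspace U p" using S L0X by simp
qed

lemma aux_sq: "(s::real) > 0 \<Longrightarrow> s * (2*d/s)^2 = 4*(d^2/s)"
  by (simp add: power2_eq_square field_simps)

lemma QFI_eq: assumes "density_mat \<rho>" "spectral_decomp \<rho> U p" "hermitian_mat H"
  shows "QFI U p H = (\<Sum>k\<in>UNIV. \<Sum>l\<in>UNIV. p k * (cmod (Lc U p H $ k $ l))^2)"
proof -
  have u: "unitary_mat U" using assms by (simp add: spectral_decomp_def)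
  have pn: "\<And>k. p k \<ge> 0" using p_nonneg[OF assms(1,2)] by blast
  have h: "cmod (melem U H l k) = cmod (melem U H k l)" for k l
    using assms(3) herm_iff[OF u] by (metis complex_mod_cnj)
  define f where "f k l = (if p k + p l > 0 then (2 * (p k - p l) / (p k + p l))^2 * (cmod (melem U H k l))^2 else 0)" for k l
  define g where "g k l = (if p k + p l > 0 then (p k - p l)^2 / (p k + p l) * (cmod (melem U H k l))^2 else 0)" for k l
  have sq: "(2 * (p l - p k) / (p l + p k))^2 = (2 * (p k - p l) / (p k + p l))^2" for k l
  proof -
    have "(2 * (p l - p k))^2 = (2 * (p k - p l))^2" by (simp add: power2_eq_square algebra_simps)
    then show ?thesis by (simp add: power_divide add.commute)
  qed
  have fs: "f l k = f k l" for k l unfolding f_def h[of k l] sq by (simp add: add.commute)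
  have A: "(\<Sum>k\<in>UNIV. \<Sum>l\<in>UNIV. p k * (cmod (Lc U p H $ k $ l))^2) = (\<Sum>k\<in>UNIV. \<Sum>l\<in>UNIV. p k * f k l)"
  proof (intro sum.cong refl)
    fix k l
    have hh: "(cmod (\<i> * complex_of_real r * z))^2 = r^2 * (cmod z)^2" for r z
      by (simp add: norm_mult power_mult_distrib)
    show "p k * (cmod (Lc U p H $ k $ l))^2 = p k * f k l"
    proof (cases "p k + p l > 0")
      case True
      show ?thesis unfolding Lc_def f_def vec_lambda_beta if_P[OF True] hh ..
    next
      case False
      show ?thesis unfolding Lc_def f_def vec_lambda_beta if_not_P[OF False] by simp
    qed
  qed
  have B: "(\<Sum>k\<in>UNIV. \<Sum>l\<in>UNIV. p k * f k l) = (\<Sum>k\<in>UNIV. \<Sum>l\<in>UNIV. p l * f k l)"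
    by (subst sum.swap) (simp add: fs)
  have C: "p k * f k l + p l * f k l = 4 * g k l" for k l
  proof (cases "p k + p l > 0")
    case True
    have e: "(p k + p l) * (2 * (p k - p l) / (p k + p l))^2 = 4 * ((p k - p l)^2 / (p k + p l))"
      using True by (rule aux_sq)
    have "p k * f k l + p l * f k l = (p k + p l) * f k l" by (simp add: algebra_simps)
    also have "\<dots> = 4 * g k l" unfolding f_def g_def if_P[OF True]
      using e by (simp add: mult.assoc[symmetric])
    finally show ?thesis .
  next
    case False then show ?thesis unfolding f_def g_def by simp
  qed
  have "2 * (\<Sum>k\<in>UNIV. \<Sum>l\<in>UNIV. p k * f k l) = (\<Sum>k\<in>UNIV. \<Sum>l\<in>UNIV. p k * f k l + p l * f k l)"
    using B by (simp add: sum.distrib)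
  also have "\<dots> = 4 * (\<Sum>k\<in>UNIV. \<Sum>l\<in>UNIV. g k l)" by (simp add: C sum_distrib_left)
  finally have "(\<Sum>k\<in>UNIV. \<Sum>l\<in>UNIV. p k * f k l) = QFI U p H"
    unfolding QFI_def g_def by simp
  then show ?thesis using A by simp
qed



lemma melem_icomm_Lc: assumes "density_mat \<rho>" "spectral_decomp \<rho> U p"
  shows "melem U (icomm \<rho> H) k l = of_real ((p k + p l)/2) * Lc U p H $ k $ l"
proof (cases "p k + p l > 0")
  case True
  define r where "r = 2 * (p k - p l) / (p k + p l)"
  have wr: "(p k + p l)/2 * r = p k - p l" using True unfolding r_def by (simp add: field_simps)
  have "Lc U p H $ k $ l = \<i> * of_real r * melem U H k l"
    unfolding Lc_def vec_lambda_beta if_P[OF True] r_def ..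
  then have "of_real ((p k + p l)/2) * Lc U p H $ k $ l = \<i> * of_real ((p k + p l)/2 * r) * melem U H k l"
    by (simp add: algebra_simps)
  then show ?thesis unfolding wr melem_icomm[OF assms(2)] by simp
next
  case False then have "p k = 0" "p l = 0" using p_nonneg[OF assms, of k] p_nonneg[OF assms, of l] by auto
  then show ?thesis by (simp add: Lc_def melem_icomm[OF assms(2)])
qed

lemma melem_gen: assumes "density_mat \<rho>" "spectral_decomp \<rho> U p"
  shows "melem U ((Rop \<rho> ^^ j) (icomm \<rho> H)) k l = of_real (((p k + p l)/2)^(Suc j)) * Lc U p H $ k $ l"
proof (induction j)
  case 0 then show ?case using melem_icomm_Lc[OF assms] by simp
next
  case (Suc j)
  have "melem U ((Rop \<rho> ^^ Suc j) (icomm \<rho> H)) k l = of_real ((p k + p l)/2) * melem U ((Rop \<rho> ^^ j) (icomm \<rho> H)) k l"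
    by (simp only: funpow.simps o_apply melem_Rop[OF assms(2)])
  also have "\<dots> = of_real ((p k + p l)/2) * (of_real (((p k + p l)/2)^(Suc j)) * Lc U p H $ k $ l)"
    by (simp only: Suc.IH)
  also have "\<dots> = of_real (((p k + p l)/2)^(Suc (Suc j))) * Lc U p H $ k $ l"
    by (simp only: power_Suc[of _ "Suc j"] of_real_mult mult.assoc)
  finally show ?case .
qed

lemma krylov_elem: fixes n :: nat and c :: "nat \<Rightarrow> real" and H :: "complex^'n^'n"
  assumes "density_mat \<rho>" "spectral_decomp \<rho> U p"
  defines "Y \<equiv> (\<Sum>j<n. c j *\<^sub>R (Rop \<rho> ^^ j) (icomm \<rho> H))"
  shows "Y \<in> krylov \<rho> H n"
    and "melem U Y k l = of_real ((p k + p l)/2 * (\<Sum>j<n. c j * ((p k + p l)/2)^j)) * Lc U p H $ k $ l"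
proof -
  show "Y \<in> krylov \<rho> H n" unfolding Y_def krylov_def
    by (intro span_sum span_scale span_base) auto
  show "melem U Y k l = of_real ((p k + p l)/2 * (\<Sum>j<n. c j * ((p k + p l)/2)^j)) * Lc U p H $ k $ l"
    unfolding Y_def melem_sum melem_scaleR melem_gen[OF assms(1) assms(2)]
    by (simp add: scaleR_conv_of_real sum_distrib_left sum_distrib_right algebra_simps)
qed

lemma kappa_facts:
  fixes p :: "'n::finite \<Rightarrow> real"
  assumes pn: "\<And>k. p k \<ge> 0" and ex: "\<exists>k. p k \<noteq> 0"
  defines "b \<equiv> Max {p k | k. p k \<noteq> 0}"
  defines "a \<equiv> (if (\<forall>k. p k \<noteq> 0) then Min {p k | k. p k \<noteq> 0} else Min {p k | k. p k \<noteq> 0} / 2)"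
  shows "0 < a" "a \<le> b" "kappa p = b / a"
    "\<And>k l. p k > 0 \<Longrightarrow> a \<le> (p k + p l)/2 \<and> (p k + p l)/2 \<le> b"
proof -
  define N where "N = {p k | k. p k \<noteq> 0}"
  have fin: "finite N" unfolding N_def
    using finite_image_set[of "\<lambda>k. p k \<noteq> 0" p] by simp
  have ne: "N \<noteq> {}" using ex unfolding N_def by auto
  have pos: "x \<in> N \<Longrightarrow> x > 0" for x unfolding N_def using pn by (auto simp: order.order_iff_strict)
  define m where "m = Min N"
  have mN: "m \<in> N" unfolding m_def using fin ne by simp
  have m0: "m > 0" using pos mN by simp
  have bN: "b \<in> N" unfolding b_def N_def[symmetric] using fin ne by simp
  have mle: "x \<in> N \<Longrightarrow> m \<le> x" for x unfolding m_def using fin by simp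
  have ble: "x \<in> N \<Longrightarrow> x \<le> b" for x unfolding b_def N_def[symmetric] using fin by simp
  have a: "a = (if (\<forall>k. p k \<noteq> 0) then m else m / 2)" unfolding a_def m_def N_def ..
  show "0 < a" unfolding a using m0 by simp
  show "a \<le> b" unfolding a using mle[OF bN] m0 by auto
  show "kappa p = b / a" unfolding kappa_def Let_def a b_def m_def N_def by auto
  fix k l assume pk: "p k > 0"
  have kN: "p k \<in> N" unfolding N_def using pk by auto
  have lb: "p l \<le> b" using ble[of "p l"] pn[of l] bN pos[OF bN] unfolding N_def
    by (cases "p l = 0") auto
  have up: "(p k + p l)/2 \<le> b" using ble[OF kN] lb by simp
  have lo: "a \<le> (p k + p l)/2"
  proof (cases "\<forall>k. p k \<noteq> 0")
    case True
    then have "p l \<in> N" unfolding N_def by auto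
    then show ?thesis using mle[OF kN] mle[of "p l"] unfolding a using True by simp
  next
    case False
    then show ?thesis using mle[OF kN] pn[of l] unfolding a if_not_P[OF False] by simp
  qed
  show "a \<le> (p k + p l)/2 \<and> (p k + p l)/2 \<le> b" using up lo by simp
qed



lemma phi_self: fixes p :: "'n::finite \<Rightarrow> real"
  assumes "\<And>k. p k \<ge> 0"
  shows "phi U p X \<bullet> phi U p X = (\<Sum>k\<in>UNIV. \<Sum>l\<in>UNIV. p k * (cmod (melem U X k l))^2)"
  unfolding phi_inner[OF assms] by (simp add: complex_norm_square[symmetric] del: of_real_power)

lemma bound_n:
  fixes \<rho> H U :: "complex^'n^'n" and p :: "'n \<Rightarrow> real"
  assumes dm: "density_mat \<rho>" and hH: "hermitian_mat H" and sd: "spectral_decomp \<rho> U p"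
    and F: "QFI U p H > 0" and n: "n \<ge> 1"
  shows "\<bar>krylov_bound \<rho> U p H n - QFI U p H\<bar> / QFI U p H
             \<le> 4 * ((sqrt (kappa p) - 1) / (sqrt (kappa p) + 1)) ^ (2 * n)"
proof -
  have u: "unitary_mat U" using sd by (simp add: spectral_decomp_def)
  have pn: "\<And>k. p k \<ge> 0" using p_nonneg[OF dm sd] by blast
  have ex: "\<exists>k. p k \<noteq> 0"
  proof (rule ccontr)
    assume "\<not> (\<exists>k. p k \<noteq> 0)"
    then have "QFI U p H = 0" by (simp add: QFI_def)
    then show False using F by simp
  qed
  define b where "b = Max {p k | k. p k \<noteq> 0}"
  define a where "a = (if (\<forall>k. p k \<noteq> 0) then Min {p k | k. p k \<noteq> 0} else Min {p k | k. p k \<noteq> 0} / 2)"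
  note kf = kappa_facts[OF pn ex, folded a_def b_def]
  define r where "r = (sqrt (kappa p) - 1) / (sqrt (kappa p) + 1)"
  define M where "M = 2 * r ^ n"
  obtain c where c: "\<And>x. x \<in> {a..b} \<Longrightarrow> \<bar>1 - x * (\<Sum>j<n. c j * x^j)\<bar> \<le> M"
    using cheb_exists[OF kf(1) kf(2) n] unfolding M_def r_def kf(3) by blast
  define L where "L = SLD \<rho> U p H"
  have LX: "L \<in> Xspace U p" unfolding L_def by (rule SLD_eq(3)[OF dm sd hH])
  have mL: "melem U L k l = Lc U p H $ k $ l" for k l unfolding L_def by (rule SLD_eq(2)[OF dm sd hH])
  have FL: "QFI U p H = phi U p L \<bullet> phi U p L"
    unfolding phi_self[OF pn] mL QFI_eq[OF dm sd hH] ..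
  define G where "G = (\<lambda>j. (Rop \<rho> ^^ j) (icomm \<rho> H)) ` {..<n}"
  define K where "K = krylov \<rho> H n"
  have KG: "K = span G" unfolding K_def krylov_def G_def ..
  have KX: "K \<subseteq> Xspace U p" unfolding K_def by (rule krylov_Xspace[OF sd hH])
  have sX: "subspace (Xspace U p)" by (rule subspace_Xspace[OF u])
  have lin: "linear (phi U p)" by (rule phi_linear)
  have spanG: "span (phi U p ` G) = phi U p ` K" unfolding KG by (rule span_linear_image[OF lin])
  obtain y z where y: "y \<in> span (phi U p ` G)" and zo: "\<And>w. w \<in> span (phi U p ` G) \<Longrightarrow> orthogonal z w"
    and yz: "phi U p L = y + z"
    using orthogonal_subspace_decomp_exists by blast
  obtain Y0 where Y0K: "Y0 \<in> K" and yY: "y = phi U p Y0" using y unfolding spanG by auto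
  have Y0X: "Y0 \<in> Xspace U p" using Y0K KX by auto
  have zperp: "\<And>Z. Z \<in> K \<Longrightarrow> z \<bullet> phi U p Z = 0"
    using zo unfolding spanG orthogonal_def by auto
  have herm: "\<And>X. X \<in> Xspace U p \<Longrightarrow> hermitian_mat X" by (rule Xspace_herm)
  have ri: "\<And>X Z. X \<in> Xspace U p \<Longrightarrow> Z \<in> Xspace U p \<Longrightarrow> rho_inner \<rho> X Z = phi U p X \<bullet> phi U p Z"
    using rho_inner_herm[OF dm sd] herm by blast
  have orth0: "\<forall>Z\<in>K. rho_inner \<rho> (L - Y0) Z = 0"
  proof
    fix Z assume Z: "Z \<in> K"
    have "rho_inner \<rho> (L - Y0) Z = phi U p (L - Y0) \<bullet> phi U p Z"
      using ri subspace_diff[OF sX LX Y0X] Z KX by auto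
    also have "\<dots> = z \<bullet> phi U p Z" unfolding linear_diff[OF lin] yz yY by simp
    also have "\<dots> = 0" using zperp Z by simp
    finally show "rho_inner \<rho> (L - Y0) Z = 0" .
  qed
  have uniq: "Y1 = Y0" if Y1: "Y1 \<in> K \<and> (\<forall>Z\<in>K. rho_inner \<rho> (L - Y1) Z = 0)" for Y1
  proof -
    have Y1K: "Y1 \<in> K" using Y1 by simp
    have Y1X: "Y1 \<in> Xspace U p" using Y1K KX by auto
    define D where "D = Y0 - Y1"
    have DK: "D \<in> K" unfolding D_def KG using Y0K Y1K KG by (simp add: span_diff)
    have DX: "D \<in> Xspace U p" using DK KX by auto
    have e1: "rho_inner \<rho> (L - Y1) D = 0" using Y1 DK by simp
    have e0: "rho_inner \<rho> (L - Y0) D = 0" using orth0 DK by simp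
    have "phi U p (L - Y1) \<bullet> phi U p D = 0" using e1 ri subspace_diff[OF sX LX Y1X] DX by simp
    moreover have "phi U p (L - Y0) \<bullet> phi U p D = 0" using e0 ri subspace_diff[OF sX LX Y0X] DX by simp
    ultimately have "(phi U p (L - Y1) - phi U p (L - Y0)) \<bullet> phi U p D = 0" by (simp add: inner_diff_left)
    moreover have "phi U p (L - Y1) - phi U p (L - Y0) = phi U p D"
      unfolding D_def linear_diff[OF lin] by simp
    ultimately have "phi U p D \<bullet> phi U p D = 0" by simp
    then have "D = 0" by (rule phi_zero[OF u pn DX])
    then show ?thesis unfolding D_def by simp
  qed
  have KP: "krylov_proj \<rho> U p H n = Y0" unfolding krylov_proj_def L_def[symmetric] K_def[symmetric]
  proof (rule the_equality)
    show "Y0 \<in> K \<and> (\<forall>Z\<in>K. rho_inner \<rho> (L - Y0) Z = 0)" using Y0K orth0 by blast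
  next
    fix Y1 assume "Y1 \<in> K \<and> (\<forall>Z\<in>K. rho_inner \<rho> (L - Y1) Z = 0)"
    then show "Y1 = Y0" by (rule uniq)
  qed
  have B: "krylov_bound \<rho> U p H n = y \<bullet> y"
  proof -
    have "rho_inner \<rho> Y0 Y0 = y \<bullet> y" using ri[OF Y0X Y0X] yY by simp
    moreover have "y \<bullet> y \<ge> 0" by simp
    ultimately show ?thesis unfolding krylov_bound_def KP rho_norm_def by simp
  qed
  have yz0: "y \<bullet> z = 0" using zperp Y0K yY by (simp add: inner_commute)
  have Fyz: "QFI U p H = y \<bullet> y + z \<bullet> z" unfolding FL yz using yz0
    by (simp add: inner_add_left inner_add_right inner_commute)
  define Y where "Y = (\<Sum>j<n. c j *\<^sub>R (Rop \<rho> ^^ j) (icomm \<rho> H))"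
  have YK: "Y \<in> K" unfolding Y_def K_def by (rule krylov_elem(1)[OF dm sd])
  have mY: "melem U Y k l = of_real ((p k + p l)/2 * (\<Sum>j<n. c j * ((p k + p l)/2)^j)) * Lc U p H $ k $ l" for k l
    unfolding Y_def by (rule krylov_elem(2)[OF dm sd])
  have zle: "z \<bullet> z \<le> phi U p (L - Y) \<bullet> phi U p (L - Y)"
  proof -
    have d: "phi U p (L - Y) = z + (y - phi U p Y)" unfolding linear_diff[OF lin] yz by simp
    have "y - phi U p Y \<in> phi U p ` K" using Y0K YK yY unfolding spanG[symmetric]
      by (intro span_diff) (auto intro: span_base span_superset simp: spanG)
    then have "z \<bullet> (y - phi U p Y) = 0" using zo unfolding spanG orthogonal_def by blast
    then have "phi U p (L - Y) \<bullet> phi U p (L - Y) = z \<bullet> z + (y - phi U p Y) \<bullet> (y - phi U p Y)"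
      unfolding d by (simp add: inner_add_left inner_add_right inner_commute)
    then show ?thesis by simp
  qed
  have errb: "phi U p (L - Y) \<bullet> phi U p (L - Y) \<le> M^2 * QFI U p H"
  proof -
    have "phi U p (L - Y) \<bullet> phi U p (L - Y) = (\<Sum>k\<in>UNIV. \<Sum>l\<in>UNIV. p k * (cmod (melem U (L - Y) k l))^2)"
      by (rule phi_self[OF pn])
    also have "\<dots> \<le> (\<Sum>k\<in>UNIV. \<Sum>l\<in>UNIV. M^2 * (p k * (cmod (Lc U p H $ k $ l))^2))"
    proof (intro sum_mono)
      fix k l
      define x where "x = (p k + p l)/2"
      have me: "melem U (L - Y) k l = of_real (1 - x * (\<Sum>j<n. c j * x^j)) * Lc U p H $ k $ l"
        unfolding melem_diff mL mY x_def by (simp add: algebra_simps)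
      show "p k * (cmod (melem U (L - Y) k l))^2 \<le> M^2 * (p k * (cmod (Lc U p H $ k $ l))^2)"
      proof (cases "p k > 0")
        case True
        have "x \<in> {a..b}" using kf(4)[OF True, of l] unfolding x_def by simp
        then have s: "\<bar>1 - x * (\<Sum>j<n. c j * x^j)\<bar> \<le> M" by (rule c)
        have "(1 - x * (\<Sum>j<n. c j * x^j))^2 \<le> M^2"
          using power_mono[OF s abs_ge_zero, of 2] by (simp only: power2_abs)
        then have "(1 - x * (\<Sum>j<n. c j * x^j))^2 * (p k * (cmod (Lc U p H $ k $ l))^2)
             \<le> M^2 * (p k * (cmod (Lc U p H $ k $ l))^2)"
          using pn[of k] by (intro mult_right_mono) auto
        then show ?thesis unfolding me norm_mult norm_of_real power_mult_distrib power2_abs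
          by (simp add: algebra_simps)
      next
        case False then have "p k = 0" using pn[of k] by simp
        then show ?thesis by simp
      qed
    qed
    also have "\<dots> = M^2 * QFI U p H" unfolding QFI_eq[OF dm sd hH]
      by (simp add: sum_distrib_left)
    finally show ?thesis .
  qed
  have zz: "z \<bullet> z \<ge> 0" by simp
  have main: "\<bar>krylov_bound \<rho> U p H n - QFI U p H\<bar> = z \<bullet> z" unfolding B Fyz using zz by simp
  have "\<bar>krylov_bound \<rho> U p H n - QFI U p H\<bar> / QFI U p H \<le> M^2"
    unfolding main using zle errb F by (simp add: divide_le_eq)
  also have "M^2 = 4 * r ^ (2 * n)" unfolding M_def by (simp add: power_mult_distrib power_mult[symmetric] mult.commute)
  finally show ?thesis unfolding r_def .
qed


theorem theorem1:
  fixes \<rho> H U :: "complex^'n^'n" and p :: "'n \<Rightarrow> real"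
  assumes "density_mat \<rho>"
    and "hermitian_mat H"
    and "spectral_decomp \<rho> U p"
    and "QFI U p H > 0"
  shows "(\<forall>n::nat. n \<ge> 1 \<longrightarrow>
           \<bar>krylov_bound \<rho> U p H n - QFI U p H\<bar> / QFI U p H
             \<le> 4 * ((sqrt (kappa p) - 1) / (sqrt (kappa p) + 1)) ^ (2 * n))
         \<and> (\<lambda>n. \<bar>krylov_bound \<rho> U p H n - QFI U p H\<bar> / QFI U p H) \<longlonglongrightarrow> 0"
proof -
  have bnd: "\<forall>n::nat. n \<ge> 1 \<longrightarrow>
           \<bar>krylov_bound \<rho> U p H n - QFI U p H\<bar> / QFI U p H
             \<le> 4 * ((sqrt (kappa p) - 1) / (sqrt (kappa p) + 1)) ^ (2 * n)"
    using bound_n[OF assms] by blast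
  have pn: "\<And>k. p k \<ge> 0" using p_nonneg[OF assms(1,3)] by blast
  have ex: "\<exists>k. p k \<noteq> 0"
  proof (rule ccontr)
    assume "\<not> (\<exists>k. p k \<noteq> 0)"
    then have "QFI U p H = 0" by (simp add: QFI_def)
    then show False using assms(4) by simp
  qed
  note kf = kappa_facts[OF pn ex]
  have k1: "kappa p \<ge> 1" unfolding kf(3) using kf(1) kf(2) by simp
  define r where "r = (sqrt (kappa p) - 1) / (sqrt (kappa p) + 1)"
  have s1: "sqrt (kappa p) \<ge> 1" using k1 by simp
  have r0: "r \<ge> 0" unfolding r_def using s1 by simp
  have r1: "r < 1" unfolding r_def using s1 by (simp add: divide_less_eq not_less)
  have "(\<lambda>n. (r^2)^n) \<longlonglongrightarrow> 0"
    by (rule LIMSEQ_power_zero) (use r0 r1 in \<open>simp add: abs_square_less_1\<close>)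
  then have g: "(\<lambda>n. 4 * r ^ (2 * n)) \<longlonglongrightarrow> 0"
    by (simp add: power_mult tendsto_mult_right_zero)
  have ev: "eventually (\<lambda>n. norm (\<bar>krylov_bound \<rho> U p H n - QFI U p H\<bar> / QFI U p H) \<le> 4 * r ^ (2 * n)) sequentially"
  proof (rule eventually_sequentiallyI[of 1])
    fix n :: nat assume "1 \<le> n"
    then show "norm (\<bar>krylov_bound \<rho> U p H n - QFI U p H\<bar> / QFI U p H) \<le> 4 * r ^ (2 * n)"
      using bnd assms(4) unfolding r_def by simp
  qed
  have "(\<lambda>n. \<bar>krylov_bound \<rho> U p H n - QFI U p H\<bar> / QFI U p H) \<longlonglongrightarrow> 0"
    by (rule Lim_null_comparison[OF ev g])
  then show ?thesis using bnd by blast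
qed

end
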